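(* Let $[x]_{ap}$ be a maximal ap-basic class (an ap-quasiattractor). Then for $z\in M$ we have $x<_{ap}z$ if and only if $z\in[x]_{ap}$. In particular, every ap-quasiattractor is compact.
   Context: Let $M\subset\mathbb{R}^d$ be closed. Let $F:M\to M$ be continuous with $\sup_{x\in M}\|F(x)\|<\infty$. Let $d(x,y)=\max_i|x_i-y_i|$. Suppose $M=M_0\cup M_1$ (disjoint) with $M_0$ closed, $F(M_0)\subseteq M_0$ and $F(M_1)\subseteq M_1$. ap-chain recurrence. For $\delta>0$, an ap $\delta$-pseudoorbit joining $x$ to $y$ is a tuple $(\xi_0,\dots,\xi_n)\in M^{n+1}$, $n\ge1$, with: - $\xi_0=x$ and $\xi_n=y$; - $\xi_i\in M_0\Rightarrow\xi_{i+1}\in M_0$; - $d(\xi_{i+1},F(\xi_i))<\delta$ for all $i$. Write $x<_{ap}y$ if for every $\delta>0$ such a pseudoorbit exists, and $x\sim_{ap}y$ if both $x<_{ap}y$ and $y<_{ap}x$. Let $\mathcal{R}_{ap}=\{x:x\sim_{ap}x\}$. The ap-basic classes are the equivalence classes $[x]_{ap}$ of $\sim_{ap}$ on $\mathcal{R}_{ap}$. Write $[x]_{ap}<_{ap}[y]_{ap}$ if $x<_{ap}y$. An ap-quasiattractor is a maximal ap-basic class, i.e. one such that $[x]_{ap}<_{ap}[y]_{ap}$ implies $[x]_{ap}=[y]_{ap}$. *)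

theory Defs
  imports "HOL-Analysis.Analysis"
begin

text \<open>Points of R^d are modelled as vectors of type real^'n (d = CARD('n)).
  The metric is the maximum metric d(x,y) = max_i |x_i - y_i|.\<close>

definition dmax :: "real^'n \<Rightarrow> real^'n \<Rightarrow> real" where
  "dmax x y = Max (range (\<lambda>i. \<bar>x $ i - y $ i\<bar>))"

definition ap_pseudoorbit ::
  "(real^'n) set \<Rightarrow> (real^'n) set \<Rightarrow> (real^'n \<Rightarrow> real^'n) \<Rightarrow> real \<Rightarrow>
   real^'n \<Rightarrow> real^'n \<Rightarrow> (nat \<Rightarrow> real^'n) \<Rightarrow> nat \<Rightarrow> bool" where
  "ap_pseudoorbit M M0 F \<delta> x y \<xi> n \<longleftrightarrow>
     n \<ge> 1 \<and> (\<forall>i\<le>n. \<xi> i \<in> M) \<and> \<xi> 0 = x \<and> \<xi> n = y \<and>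
     (\<forall>i<n. \<xi> i \<in> M0 \<longrightarrow> \<xi> (Suc i) \<in> M0) \<and>
     (\<forall>i<n. dmax (\<xi> (Suc i)) (F (\<xi> i)) < \<delta>)"

definition ap_less ::
  "(real^'n) set \<Rightarrow> (real^'n) set \<Rightarrow> (real^'n \<Rightarrow> real^'n) \<Rightarrow> real^'n \<Rightarrow> real^'n \<Rightarrow> bool" where
  "ap_less M M0 F x y \<longleftrightarrow> (\<forall>\<delta>>0. \<exists>\<xi> n. ap_pseudoorbit M M0 F \<delta> x y \<xi> n)"

definition ap_equiv ::
  "(real^'n) set \<Rightarrow> (real^'n) set \<Rightarrow> (real^'n \<Rightarrow> real^'n) \<Rightarrow> real^'n \<Rightarrow> real^'n \<Rightarrow> bool" where
  "ap_equiv M M0 F x y \<longleftrightarrow> ap_less M M0 F x y \<and> ap_less M M0 F y x"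

definition R_ap :: "(real^'n) set \<Rightarrow> (real^'n) set \<Rightarrow> (real^'n \<Rightarrow> real^'n) \<Rightarrow> (real^'n) set" where
  "R_ap M M0 F = {x \<in> M. ap_equiv M M0 F x x}"

definition ap_class ::
  "(real^'n) set \<Rightarrow> (real^'n) set \<Rightarrow> (real^'n \<Rightarrow> real^'n) \<Rightarrow> real^'n \<Rightarrow> (real^'n) set" where
  "ap_class M M0 F x = {y \<in> R_ap M M0 F. ap_equiv M M0 F x y}"

definition ap_quasiattractor_of ::
  "(real^'n) set \<Rightarrow> (real^'n) set \<Rightarrow> (real^'n \<Rightarrow> real^'n) \<Rightarrow> real^'n \<Rightarrow> bool" where
  "ap_quasiattractor_of M M0 F x \<longleftrightarrow> x \<in> R_ap M M0 F \<and>
     (\<forall>y \<in> R_ap M M0 F. ap_less M M0 F x y \<longrightarrow> ap_class M M0 F x = ap_class M M0 F y)"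

end

theory Submission imports Defs begin

lemma dmax_comp: "\<bar>x$i - y$i\<bar> \<le> dmax x y"
  unfolding dmax_def by (rule Max_ge) auto

lemma dmax_le_dist: "dmax x y \<le> dist x y"
  unfolding dmax_def
proof (subst Max_le_iff)
  show "\<forall>a\<in>range (\<lambda>i. \<bar>x $ i - y $ i\<bar>). a \<le> dist x y"
    using component_le_norm_cart[of "x - y"] by (auto simp: dist_norm)
qed auto

lemma dmax_refl: "dmax x x = 0"
  unfolding dmax_def by simp

lemma dmax_triangle: "dmax x z \<le> dmax x y + dmax y z"
  unfolding dmax_def[of x z]
proof (subst Max_le_iff)
  show "\<forall>a\<in>range (\<lambda>i. \<bar>x $ i - z $ i\<bar>). a \<le> dmax x y + dmax y z"
  proof
    fix a assume "a \<in> range (\<lambda>i. \<bar>x $ i - z $ i\<bar>)"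
    then obtain i where a: "a = \<bar>x $ i - z $ i\<bar>" by auto
    have "\<bar>x $ i - z $ i\<bar> \<le> \<bar>x $ i - y $ i\<bar> + \<bar>y $ i - z $ i\<bar>" by simp
    also have "\<dots> \<le> dmax x y + dmax y z" using dmax_comp[of x i y] dmax_comp[of y i z] by simp
    finally show "a \<le> dmax x y + dmax y z" using a by simp
  qed
qed auto

lemma norm_le_dmax: "norm (x - y) \<le> real CARD('n) * dmax x (y::real^'n)"
proof -
  have "norm (x - y) \<le> (\<Sum>i\<in>UNIV. \<bar>(x - y)$i\<bar>)" by (rule norm_le_l1_cart)
  also have "\<dots> \<le> (\<Sum>i\<in>(UNIV::'n set). dmax x y)"
    by (rule sum_mono) (simp add: dmax_comp)
  finally show ?thesis by simp
qed


definition omega :: "(real^'n \<Rightarrow> real^'n) \<Rightarrow> real^'n \<Rightarrow> (real^'n) set" where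
  "omega F u = {y. \<forall>e>0. \<forall>N. \<exists>k\<ge>N. dist ((F^^k) u) y < e}"

lemma funpow_in: "u \<in> S \<Longrightarrow> F ` S \<subseteq> S \<Longrightarrow> (F^^k) u \<in> S"
  by (induction k) auto

lemma omega_in:
  assumes "closed S" "u \<in> S" "F ` S \<subseteq> S" "y \<in> omega F u"
  shows "y \<in> S"
proof -
  have "\<forall>e>0. \<exists>v\<in>S. dist v y < e"
  proof (intro allI impI)
    fix e :: real assume "e > 0"
    then obtain k where "dist ((F^^k) u) y < e" using assms(4) unfolding omega_def by blast
    then show "\<exists>v\<in>S. dist v y < e" using funpow_in[OF assms(2,3)] by blast
  qed
  then show ?thesis using closed_approachable[OF assms(1)] by blast
qed

lemma omega_nonempty:
  assumes "closed M" "u \<in> M" "F ` M \<subseteq> M" "bounded (F ` M)"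
  shows "\<exists>y. y \<in> omega F u"
proof -
  define S where "S = closure (F ` M)"
  have sc: "seq_compact S" unfolding S_def
    using assms(4) by (intro bounded_closed_imp_seq_compact) auto
  define f where "f k = (F^^(Suc k)) u" for k
  have "f k \<in> S" for k unfolding f_def S_def
    using funpow_in[OF assms(2,3), of k] closure_subset[of "F ` M"] by auto
  then obtain l r where r: "strict_mono r" "(f \<circ> r) \<longlonglongrightarrow> l"
    using sc unfolding seq_compact_def by blast
  have "l \<in> omega F u" unfolding omega_def
  proof (safe)
    fix e :: real and N :: nat assume "e > 0"
    then have "eventually (\<lambda>n. dist ((f \<circ> r) n) l < e) sequentially"
      using r(2) tendstoD by blast
    then obtain n0 where n0: "\<And>n. n \<ge> n0 \<Longrightarrow> dist ((f \<circ> r) n) l < e"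
      unfolding eventually_sequentially by blast
    define n where "n = max n0 N"
    have "dist ((F^^(Suc (r n))) u) l < e" using n0[of n] unfolding n_def f_def by simp
    moreover have "Suc (r n) \<ge> N" using seq_suble[OF r(1), of n] unfolding n_def by simp
    ultimately show "\<exists>k\<ge>N. dist ((F ^^ k) u) l < e" by blast
  qed
  then show ?thesis by blast
qed


lemma funpow_M0_back:
  assumes "u \<in> M" "M = M0 \<union> M1" "M0 \<inter> M1 = {}" "F ` M1 \<subseteq> M1" "(F^^k) u \<in> M0"
  shows "u \<in> M0"
proof (rule ccontr)
  assume "u \<notin> M0"
  then have "u \<in> M1" using assms by auto
  then have "(F^^k) u \<in> M1" using funpow_in assms(4) by metis
  then show False using assms(3,5) by auto
qed

lemma omega_less:
  assumes "closed M" "M = M0 \<union> M1" "M0 \<inter> M1 = {}" "closed M0"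
    "F ` M \<subseteq> M" "F ` M0 \<subseteq> M0" "F ` M1 \<subseteq> M1" "u \<in> M" "y \<in> omega F u"
  shows "ap_less M M0 F u y"
  unfolding ap_less_def
proof (intro allI impI)
  fix \<delta> :: real assume "\<delta> > 0"
  then obtain k where k: "k \<ge> 1" "dist ((F^^k) u) y < \<delta>"
    using assms(9) unfolding omega_def by blast
  have yM: "y \<in> M" using omega_in[OF assms(1,8,5,9)] .
  have yM0: "y \<in> M0" if "u \<in> M0" using omega_in[OF assms(4) that assms(6,9)] .
  define \<xi> where "\<xi> i = (if i = k then y else (F^^i) u)" for i
  have "ap_pseudoorbit M M0 F \<delta> u y \<xi> k"
    unfolding ap_pseudoorbit_def
  proof (intro conjI allI impI)
    show "1 \<le> k" by fact
    show "\<xi> i \<in> M" for i using yM funpow_in[OF assms(8,5)] unfolding \<xi>_def by auto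
    show "\<xi> 0 = u" using k unfolding \<xi>_def by auto
    show "\<xi> k = y" unfolding \<xi>_def by auto
  next
    fix i assume i: "i < k" "\<xi> i \<in> M0"
    then have "(F^^i) u \<in> M0" unfolding \<xi>_def by auto
    then have u0: "u \<in> M0" using funpow_M0_back assms by metis
    show "\<xi> (Suc i) \<in> M0" using yM0[OF u0] funpow_in[OF u0 assms(6), of "Suc i"] unfolding \<xi>_def by auto
  next
    fix i assume i: "i < k"
    show "dmax (\<xi> (Suc i)) (F (\<xi> i)) < \<delta>"
    proof (cases "Suc i = k")
      case True
      then have "dmax (\<xi> (Suc i)) (F (\<xi> i)) = dmax y ((F^^k) u)" unfolding \<xi>_def by auto
      also have "\<dots> \<le> dist y ((F^^k) u)" by (rule dmax_le_dist)
      also have "\<dots> < \<delta>" using k by (simp add: dist_commute)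
      finally show ?thesis .
    next
      case False
      then show ?thesis using i \<open>\<delta>>0\<close> unfolding \<xi>_def by (simp add: dmax_refl)
    qed
  qed
  then show "\<exists>\<xi> n. ap_pseudoorbit M M0 F \<delta> u y \<xi> n" by blast
qed

lemma omega_rec:
  assumes "closed M" "M = M0 \<union> M1" "M0 \<inter> M1 = {}" "closed M0" "continuous_on M F"
    "F ` M \<subseteq> M" "F ` M0 \<subseteq> M0" "F ` M1 \<subseteq> M1" "u \<in> M" "y \<in> omega F u"
    "y \<in> M0 \<longrightarrow> u \<in> M0"
  shows "ap_less M M0 F y y"
  unfolding ap_less_def
proof (intro allI impI)
  fix \<delta> :: real assume "\<delta> > 0"
  have yM: "y \<in> M" using omega_in[OF assms(1,9,6,10)] .
  have yM0: "y \<in> M0" if "u \<in> M0" using omega_in[OF assms(4) that assms(7,10)] .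
  obtain \<eta> where \<eta>: "\<eta> > 0" "\<And>v. v \<in> M \<Longrightarrow> dist v y < \<eta> \<Longrightarrow> dist (F v) (F y) < \<delta>"
    using assms(5) yM \<open>\<delta>>0\<close> unfolding continuous_on_iff by metis
  obtain a where a: "dist ((F^^a) u) y < \<eta>"
    using assms(10) \<eta>(1) unfolding omega_def by blast
  obtain b where b: "b \<ge> a + 2" "dist ((F^^b) u) y < \<delta>"
    using assms(10) \<open>\<delta>>0\<close> unfolding omega_def by blast
  define n where "n = b - a"
  have n2: "n \<ge> 2" using b unfolding n_def by simp
  define \<xi> where "\<xi> i = (if i = 0 \<or> i = n then y else (F^^(a+i)) u)" for i
  have "ap_pseudoorbit M M0 F \<delta> y y \<xi> n"
    unfolding ap_pseudoorbit_def
  proof (intro conjI allI impI)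
    show "1 \<le> n" using n2 by simp
    show "\<xi> i \<in> M" for i using yM funpow_in[OF assms(9,6)] unfolding \<xi>_def by auto
    show "\<xi> 0 = y" unfolding \<xi>_def by auto
    show "\<xi> n = y" unfolding \<xi>_def by auto
  next
    fix i assume i: "i < n" "\<xi> i \<in> M0"
    have u0: "u \<in> M0"
    proof (cases "i = 0")
      case True
      then show ?thesis using i assms(11) unfolding \<xi>_def by auto
    next
      case False
      then have "(F^^(a+i)) u \<in> M0" using i unfolding \<xi>_def by auto
      then show ?thesis using funpow_M0_back assms by metis
    qed
    show "\<xi> (Suc i) \<in> M0" using yM0[OF u0] funpow_in[OF u0 assms(7), of "Suc (a+i)"] unfolding \<xi>_def by auto
  next
    fix i assume i: "i < n"
    show "dmax (\<xi> (Suc i)) (F (\<xi> i)) < \<delta>"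
    proof (cases "i = 0")
      case True
      then have "dmax (\<xi> (Suc i)) (F (\<xi> i)) = dmax (F ((F^^a) u)) (F y)"
        using n2 unfolding \<xi>_def by auto
      also have "\<dots> \<le> dist (F ((F^^a) u)) (F y)" by (rule dmax_le_dist)
      also have "\<dots> < \<delta>" using \<eta>(2)[OF funpow_in[OF assms(9,6)] a] .
      finally show ?thesis .
    next
      case False
      show ?thesis
      proof (cases "Suc i = n")
        case True
        then have "a + Suc i = b" using b unfolding n_def by simp
        then have "dmax (\<xi> (Suc i)) (F (\<xi> i)) = dmax y ((F^^b) u)"
          using True False unfolding \<xi>_def by auto
        also have "\<dots> \<le> dist y ((F^^b) u)" by (rule dmax_le_dist)
        also have "\<dots> < \<delta>" using b by (simp add: dist_commute)
        finally show ?thesis .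
      next
        case False2: False
        then show ?thesis using i False \<open>\<delta>>0\<close> unfolding \<xi>_def by (simp add: dmax_refl)
      qed
    qed
  qed
  then show "\<exists>\<xi> n. ap_pseudoorbit M M0 F \<delta> y y \<xi> n" by blast
qed

lemma ap_trans:
  assumes "ap_less M M0 F x y" "ap_less M M0 F y z"
  shows "ap_less M M0 F x z"
  unfolding ap_less_def
proof (intro allI impI)
  fix \<delta> :: real assume "\<delta> > 0"
  obtain \<xi>1 n1 where p1: "ap_pseudoorbit M M0 F \<delta> x y \<xi>1 n1"
    using assms(1) \<open>\<delta>>0\<close> unfolding ap_less_def by blast
  obtain \<xi>2 n2 where p2: "ap_pseudoorbit M M0 F \<delta> y z \<xi>2 n2"
    using assms(2) \<open>\<delta>>0\<close> unfolding ap_less_def by blast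
  note p1 = p1[unfolded ap_pseudoorbit_def] and p2 = p2[unfolded ap_pseudoorbit_def]
  define \<xi> where "\<xi> i = (if i \<le> n1 then \<xi>1 i else \<xi>2 (i - n1))" for i
  have "ap_pseudoorbit M M0 F \<delta> x z \<xi> (n1 + n2)"
    unfolding ap_pseudoorbit_def
  proof (intro conjI allI impI)
    show "1 \<le> n1 + n2" using p1 by simp
    show "\<xi> i \<in> M" if "i \<le> n1 + n2" for i using p1 p2 that unfolding \<xi>_def by auto
    show "\<xi> 0 = x" using p1 unfolding \<xi>_def by auto
    show "\<xi> (n1 + n2) = z" using p1 p2 unfolding \<xi>_def by auto
  next
    fix i assume i: "i < n1 + n2" "\<xi> i \<in> M0"
    consider "i < n1" | "i = n1" | "i > n1" by linarith
    then show "\<xi> (Suc i) \<in> M0"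
    proof cases
      case 1 then show ?thesis using i p1 unfolding \<xi>_def by auto
    next
      case 2
      then have "\<xi>2 0 \<in> M0" using i p1 p2 unfolding \<xi>_def by auto
      then have "\<xi>2 (Suc 0) \<in> M0" using p2 by auto
      then show ?thesis using 2 unfolding \<xi>_def by auto
    next
      case 3
      then have "\<xi>2 (i - n1) \<in> M0" using i unfolding \<xi>_def by auto
      then have "\<xi>2 (Suc (i - n1)) \<in> M0" using p2 i 3 by auto
      moreover have "Suc (i - n1) = Suc i - n1" using 3 by simp
      ultimately show ?thesis using 3 unfolding \<xi>_def by auto
    qed
  next
    fix i assume i: "i < n1 + n2"
    consider "i < n1" | "i = n1" | "i > n1" by linarith
    then show "dmax (\<xi> (Suc i)) (F (\<xi> i)) < \<delta>"
    proof cases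
      case 1 then show ?thesis using i p1 unfolding \<xi>_def by auto
    next
      case 2
      have "dmax (\<xi>2 (Suc 0)) (F (\<xi>2 0)) < \<delta>" using p2 by auto
      then show ?thesis using 2 p1 p2 unfolding \<xi>_def by auto
    next
      case 3
      have "dmax (\<xi>2 (Suc (i - n1))) (F (\<xi>2 (i - n1))) < \<delta>" using p2 i 3 by auto
      moreover have "Suc (i - n1) = Suc i - n1" using 3 by simp
      ultimately show ?thesis using 3 unfolding \<xi>_def by auto
    qed
  qed
  then show "\<exists>\<xi> n. ap_pseudoorbit M M0 F \<delta> x z \<xi> n" by blast
qed


lemma exists_rec:
  assumes "closed M" "M = M0 \<union> M1" "M0 \<inter> M1 = {}" "closed M0" "continuous_on M F"
    "F ` M \<subseteq> M" "F ` M0 \<subseteq> M0" "F ` M1 \<subseteq> M1" "bounded (F ` M)" "z \<in> M"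
  shows "\<exists>y \<in> R_ap M M0 F. ap_less M M0 F z y"
proof -
  obtain w where w: "w \<in> omega F z" using omega_nonempty[OF assms(1,10,6,9)] by blast
  have wM: "w \<in> M" using omega_in[OF assms(1,10,6) w] .
  have zw: "ap_less M M0 F z w" using omega_less[OF assms(1-4,6-8,10) w] .
  show ?thesis
  proof (cases "w \<in> M0")
    case True
    obtain y where y: "y \<in> omega F w" using omega_nonempty[OF assms(1) wM assms(6,9)] by blast
    have yM: "y \<in> M" using omega_in[OF assms(1) wM assms(6) y] .
    have wy: "ap_less M M0 F w y" using omega_less[OF assms(1-4,6-8) wM y] .
    have yy: "ap_less M M0 F y y" using omega_rec[OF assms(1-8) wM y] True by blast
    have "y \<in> R_ap M M0 F" using yM yy unfolding R_ap_def ap_equiv_def by auto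
    then show ?thesis using ap_trans[OF zw wy] by blast
  next
    case False
    have ww: "ap_less M M0 F w w" using omega_rec[OF assms(1-8,10) w] False by blast
    have "w \<in> R_ap M M0 F" using wM ww unfolding R_ap_def ap_equiv_def by auto
    then show ?thesis using zw by blast
  qed
qed

theorem mainTheorem5:
  fixes M M0 M1 :: "(real^'n) set" and F :: "real^'n \<Rightarrow> real^'n" and x :: "real^'n"
  assumes "closed M"
    and "continuous_on M F"
    and "F ` M \<subseteq> M"
    and "bounded (F ` M)"
    and "M = M0 \<union> M1" and "M0 \<inter> M1 = {}"
    and "closed M0"
    and "F ` M0 \<subseteq> M0" and "F ` M1 \<subseteq> M1"
    and "ap_quasiattractor_of M M0 F x"
  shows "(\<forall>z \<in> M. ap_less M M0 F x z \<longleftrightarrow> z \<in> ap_class M M0 F x)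
         \<and> compact (ap_class M M0 F x)"
proof -
  have xR: "x \<in> R_ap M M0 F" and maxi: "\<And>y. y \<in> R_ap M M0 F \<Longrightarrow> ap_less M M0 F x y \<Longrightarrow>
      ap_class M M0 F x = ap_class M M0 F y"
    using assms(10) unfolding ap_quasiattractor_of_def by auto
  have fwd: "z \<in> ap_class M M0 F x" if zM: "z \<in> M" and xz: "ap_less M M0 F x z" for z
  proof -
    obtain y where yR: "y \<in> R_ap M M0 F" and zy: "ap_less M M0 F z y"
      using exists_rec[OF assms(1,5,6,7,2,3,8,9,4) zM] by blast
    have xy: "ap_less M M0 F x y" using ap_trans[OF xz zy] .
    have "y \<in> ap_class M M0 F y" using yR unfolding ap_class_def R_ap_def by auto
    then have "y \<in> ap_class M M0 F x" using maxi[OF yR xy] by simp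
    then have yx: "ap_less M M0 F y x" unfolding ap_class_def ap_equiv_def by auto
    have zx: "ap_less M M0 F z x" using ap_trans[OF zy yx] .
    have "ap_less M M0 F z z" using ap_trans[OF zx xz] .
    then show ?thesis using zM xz zx unfolding ap_class_def R_ap_def ap_equiv_def by auto
  qed
  have bwd: "ap_less M M0 F x z" if "z \<in> ap_class M M0 F x" for z
    using that unfolding ap_class_def ap_equiv_def by auto
  have subM: "ap_class M M0 F x \<subseteq> M" unfolding ap_class_def R_ap_def by auto
  have part1: "\<forall>z \<in> M. ap_less M M0 F x z \<longleftrightarrow> z \<in> ap_class M M0 F x"
    using fwd bwd by blast
  have cl: "closed (ap_class M M0 F x)"
  proof -
    have "closure (ap_class M M0 F x) \<subseteq> ap_class M M0 F x"
    proof
      fix z assume zc: "z \<in> closure (ap_class M M0 F x)"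
      have zM: "z \<in> M" using closure_mono[OF subM] zc closure_closed[OF assms(1)] by auto
      have "ap_less M M0 F x z" unfolding ap_less_def
      proof (intro allI impI)
        fix \<delta> :: real assume d: "\<delta> > 0"
        obtain r where r: "r > 0" "z \<notin> M0 \<Longrightarrow> ball z r \<inter> M0 = {}"
        proof (cases "z \<in> M0")
          case True then show ?thesis using that[of 1] by auto
        next
          case False
          have "open (- M0)" using assms(7) by auto
          then obtain r where "r > 0" "ball z r \<subseteq> - M0" using False open_contains_ball by blast
          then show ?thesis using that[of r] by auto
        qed
        obtain w where w: "w \<in> ap_class M M0 F x" "dist z w < min (\<delta>/2) r"
          using closure_approachableD[OF zc, of "min (\<delta>/2) r"] d r(1) by auto
        obtain \<xi> n where p: "ap_pseudoorbit M M0 F (\<delta>/2) x w \<xi> n"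
          using bwd[OF w(1)] d unfolding ap_less_def by (meson half_gt_zero)
        note p = p[unfolded ap_pseudoorbit_def]
        have wM0: "z \<in> M0" if "w \<in> M0"
        proof (rule ccontr)
          assume "z \<notin> M0"
          then have "ball z r \<inter> M0 = {}" using r(2) by blast
          moreover have "w \<in> ball z r" using w(2) by auto
          ultimately show False using that by blast
        qed
        define \<xi>' where "\<xi>' = \<xi>(n := z)"
        have "ap_pseudoorbit M M0 F \<delta> x z \<xi>' n"
          unfolding ap_pseudoorbit_def
        proof (intro conjI allI impI)
          show "1 \<le> n" using p by simp
          show "\<xi>' i \<in> M" if "i \<le> n" for i using p zM that unfolding \<xi>'_def by auto
          show "\<xi>' 0 = x" using p unfolding \<xi>'_def by auto
          show "\<xi>' n = z" unfolding \<xi>'_def by auto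
        next
          fix i assume i: "i < n" "\<xi>' i \<in> M0"
          then have "\<xi> (Suc i) \<in> M0" using p unfolding \<xi>'_def by auto
          then show "\<xi>' (Suc i) \<in> M0" using wM0 p unfolding \<xi>'_def by auto
        next
          fix i assume i: "i < n"
          show "dmax (\<xi>' (Suc i)) (F (\<xi>' i)) < \<delta>"
          proof (cases "Suc i = n")
            case True
            have "dmax z (F (\<xi> i)) \<le> dmax z w + dmax w (F (\<xi> i))" by (rule dmax_triangle)
            also have "\<dots> < \<delta>/2 + \<delta>/2"
            proof (rule add_less_le_mono)
              show "dmax z w < \<delta>/2" using dmax_le_dist[of z w] w(2) by linarith
              show "dmax w (F (\<xi> i)) \<le> \<delta>/2" using p i True by (metis less_imp_le)
            qed
            finally show ?thesis using True unfolding \<xi>'_def by auto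
          next
            case False
            then show ?thesis using p i d unfolding \<xi>'_def by auto
          qed
        qed
        then show "\<exists>\<xi> n. ap_pseudoorbit M M0 F \<delta> x z \<xi> n" by blast
      qed
      then show "z \<in> ap_class M M0 F x" using fwd zM by blast
    qed
    then show ?thesis using closure_subset_eq by blast
  qed
  have bd: "bounded (ap_class M M0 F x)"
  proof -
    obtain B where B: "\<And>v. v \<in> F ` M \<Longrightarrow> norm v \<le> B" using assms(4) unfolding bounded_iff by blast
    have "norm z \<le> B + real CARD('n)" if zc: "z \<in> ap_class M M0 F x" for z
    proof -
      obtain \<xi> n where p: "ap_pseudoorbit M M0 F 1 x z \<xi> n"
        using bwd[OF zc] unfolding ap_less_def by (meson zero_less_one)
      note p = p[unfolded ap_pseudoorbit_def]
      define v where "v = F (\<xi> (n - 1))"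
      have "v \<in> F ` M" using p unfolding v_def by auto
      then have nv: "norm v \<le> B" by (rule B)
      have "dmax z v < 1" using p unfolding v_def by (metis Suc_diff_1 diff_less less_numeral_extra(1) le_numeral_extra(4) order_less_le_trans)
      then have "real CARD('n) * dmax z v \<le> real CARD('n) * 1"
        by (intro mult_left_mono) auto
      then have "norm (z - v) \<le> real CARD('n)" using norm_le_dmax[of z v] by linarith
      moreover have "norm z \<le> norm v + norm (z - v)" using norm_triangle_ineq[of v "z - v"] by simp
      ultimately show ?thesis using nv by linarith
    qed
    then show ?thesis unfolding bounded_iff by blast
  qed
  show ?thesis using part1 cl bd compact_eq_bounded_closed by blast
qed

end
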